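(* Let $\mathbf X$ be a totally bounded metric space and $\gamma>0$ such that $\mathcal H_\epsilon(\mathbf X)\asymp(1/\epsilon)^\gamma$ as $\epsilon\to0$. Let $\beta\in(0,1]$, $c>0$, $B>0$, and let $\mathcal F$ be the set of functions $F:\mathbf X\to\mathbb R$ with $\sup_x|F(x)|\le B$ that are Hölder continuous of order $\beta$ with coefficient $c$. There exists a strategy for Predictor such that for every $F\in\mathcal F$ there is $N_0$ such that for all $N\ge N_0$ and all moves of Reality $$\sum_{n=1}^N(y_n-\mu_n)^2\le\sum_{n=1}^N(y_n-F(x_n))^2+C_{\beta,\gamma}\,c\,\frac{N}{\log^{\beta/\gamma}N},$$ where $C_{\beta,\gamma}$ is a constant depending only on $\beta$, $\gamma$ (and on $\mathbf X$ through the implicit constants in the relation $\asymp$), but not on $c$, $F$ or $N$.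
   Context: Protocol: at each round $n$ Reality announces $x_n\in\mathbf X$, Predictor announces $\mu_n\in\mathbb R$, Reality announces $y_n\in[-1,1]$; a strategy for Predictor maps each history to $\mu_n$. $\mathcal H_\epsilon(A)$ is $\log_2$ of the minimal number of points of $A$ forming an $\epsilon$-net for $A$ (in the relevant metric). $f\asymp g$ means $f=O(g)$ and $g=O(f)$ as $\epsilon\to0$. $F$ is Hölder continuous of order $\beta$ with coefficient $c$ if $|F(x)-F(x')|\le c\,\rho(x,x')^\beta$ for all $x,x'$, $\rho$ the metric of $\mathbf X$. $\log=\log_2$. *)

theory Defs
  imports "HOL-Analysis.Analysis" "HOL-Library.Landau_Symbols"
begin

definition net_number :: "'a::metric_space set \<Rightarrow> real \<Rightarrow> nat" where
  "net_number A \<epsilon> = (LEAST n. \<exists>S. S \<subseteq> A \<and> finite S \<and> card S = n \<and>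
                              (\<forall>x\<in>A. \<exists>s\<in>S. dist x s \<le> \<epsilon>))"

definition metric_entropy :: "'a::metric_space set \<Rightarrow> real \<Rightarrow> real" where
  "metric_entropy A \<epsilon> = log 2 (real (net_number A \<epsilon>))"

definition holder :: "real \<Rightarrow> real \<Rightarrow> ('a::metric_space \<Rightarrow> real) \<Rightarrow> bool" where
  "holder \<beta> c F \<longleftrightarrow> (\<forall>x x'. \<bar>F x - F x'\<bar> \<le> c * dist x x' powr \<beta>)"

text \<open>A Predictor strategy maps the history (previous pairs (x_i,y_i)) and the
  current x_n to the prediction mu_n. Rounds are indexed from 1.\<close>
definition predictions :: "(('a \<times> real) list \<Rightarrow> 'a \<Rightarrow> real) \<Rightarrow> (nat \<Rightarrow> 'a) \<Rightarrow> (nat \<Rightarrow> real) \<Rightarrow> nat \<Rightarrow> real" where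
  "predictions P x y n = P (map (\<lambda>i. (x i, y i)) [1..<n]) (x n)"

end

theory Submission imports Defs "HOL-Real_Asymp.Real_Asymp" begin
lemma mean_min:
  fixes y :: "nat \<Rightarrow> real"
  assumes "finite S"
  shows "(\<Sum>i\<in>S. (y i - (\<Sum>k\<in>S. y k) / card S)\<^sup>2) \<le> (\<Sum>i\<in>S. (y i - m)\<^sup>2)"
proof (cases "S = {}")
  case True then show ?thesis by simp
next
  case False
  define t where "t = real (card S)"
  define s where "s = (\<Sum>k\<in>S. y k)"
  have t: "t > 0" using False assms by (simp add: t_def card_gt_0_iff)
  have e: "\<And>a. (\<Sum>i\<in>S. (y i - a)\<^sup>2) = (\<Sum>i\<in>S. (y i)\<^sup>2) - 2 * a * s + t * a\<^sup>2"
    by (simp add: power2_diff sum.distrib sum_subtractf s_def t_def algebra_simps) (simp add: sum_distrib_left sum_distrib_right)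
  have "(\<Sum>i\<in>S. (y i - s / t)\<^sup>2) + t * (s/t - m)\<^sup>2 = (\<Sum>i\<in>S. (y i - m)\<^sup>2)"
    unfolding e using t by (simp add: field_simps power2_eq_square)
  moreover have "t * (s/t - m)\<^sup>2 \<ge> 0" using t by simp
  ultimately show ?thesis unfolding s_def t_def by linarith
qed

lemma mean_abs:
  fixes y :: "nat \<Rightarrow> real"
  assumes "finite S" "\<And>i. \<bar>y i\<bar> \<le> 1"
  shows "\<bar>(\<Sum>k\<in>S. y k) / card S\<bar> \<le> 1"
proof (cases "S = {}")
  case True then show ?thesis by simp
next
  case False
  have "\<bar>\<Sum>k\<in>S. y k\<bar> \<le> (\<Sum>k\<in>S. 1)" by (rule order_trans[OF sum_abs]) (intro sum_mono assms(2))
  then show ?thesis using False assms(1) by (simp add: card_gt_0_iff divide_le_eq_1 abs_div)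
qed

lemma ftl_aux:
  fixes y :: "nat \<Rightarrow> real"
  assumes y: "\<And>i. \<bar>y i\<bar> \<le> 1"
  shows "(\<Sum>i\<in>I\<inter>{..<n}. (y i - (\<Sum>k\<in>I\<inter>{..<i}. y k) / card (I\<inter>{..<i}))\<^sup>2)
     \<le> (\<Sum>i\<in>I\<inter>{..<n}. (y i - (\<Sum>k\<in>I\<inter>{..<n}. y k) / card (I\<inter>{..<n}))\<^sup>2) + 8 * harm (card (I\<inter>{..<n}))"
proof (induction n)
  case 0 then show ?case by (simp add: harm_def)
next
  case (Suc n)
  show ?case
  proof (cases "n \<in> I")
    case False
    then have "I\<inter>{..<Suc n} = I\<inter>{..<n}" by (auto simp: less_Suc_eq)
    then show ?thesis using Suc by simp
  next
    case True
    define S where "S = I\<inter>{..<n}"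
    have fS: "finite S" and nS: "n \<notin> S" by (auto simp: S_def)
    have eq: "I\<inter>{..<Suc n} = insert n S" using True by (auto simp: S_def less_Suc_eq)
    define t where "t = real (card S)"
    define s where "s = (\<Sum>k\<in>S. y k)"
    define M where "M = s / t"
    define M' where "M' = (s + y n) / (t + 1)"
    have ct: "real (card (insert n S)) = t + 1" using fS nS by (simp add: t_def)
    have st: "s = t * M"
    proof (cases "S = {}")
      case True then show ?thesis by (simp add: s_def t_def)
    next
      case False then have "t > 0" using fS by (simp add: t_def card_gt_0_iff)
      then show ?thesis by (simp add: M_def)
    qed
    have Mb: "\<bar>M\<bar> \<le> 1" unfolding M_def s_def t_def by (rule mean_abs[OF fS y])
    have t0: "t \<ge> 0" by (simp add: t_def)
    have M'M: "M' = M + (y n - M) / (t + 1)"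
      using t0 unfolding M'_def st by (simp add: field_simps)
    have key: "(y n - M)\<^sup>2 - (y n - M')\<^sup>2 \<le> 8 / (t + 1)"
    proof -
      define d where "d = (y n - M) / (t + 1)"
      have "(y n - M)\<^sup>2 - (y n - M')\<^sup>2 = 2 * d * (y n - M) - d\<^sup>2"
        unfolding M'M d_def[symmetric] by (simp add: power2_eq_square algebra_simps)
      also have "\<dots> \<le> 2 * d * (y n - M)" by simp
      also have "\<dots> = 2 * (y n - M)\<^sup>2 / (t + 1)" by (simp add: d_def power2_eq_square)
      also have "\<dots> \<le> 2 * 4 / (t + 1)"
      proof -
        have "\<bar>y n - M\<bar> \<le> 2" using y[of n] Mb by linarith
        then have "(y n - M)\<^sup>2 \<le> 2\<^sup>2" by (metis abs_le_square_iff abs_numeral)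
        then show ?thesis using t0 by (intro divide_right_mono) auto
      qed
      finally show ?thesis by simp
    qed
    have mm: "(\<Sum>i\<in>S. (y i - M)\<^sup>2) \<le> (\<Sum>i\<in>S. (y i - M')\<^sup>2)"
      unfolding M_def s_def t_def by (rule mean_min[OF fS])
    have harm: "harm (card (insert n S)) = harm (card S) + 1 / (t + 1)"
      using fS nS by (simp add: harm_Suc t_def inverse_eq_divide)
    have predn: "(\<Sum>k\<in>I\<inter>{..<n}. y k) / card (I\<inter>{..<n}) = M" by (simp add: M_def s_def t_def S_def)
    have IH: "(\<Sum>i\<in>S. (y i - (\<Sum>k\<in>I\<inter>{..<i}. y k) / card (I\<inter>{..<i}))\<^sup>2)
       \<le> (\<Sum>i\<in>S. (y i - M)\<^sup>2) + 8 * harm (card S)"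
      using Suc.IH by (simp add: S_def M_def s_def t_def)
    have sumM': "(\<Sum>k\<in>insert n S. y k) / card (insert n S) = M'"
      using fS nS ct by (simp add: M'_def s_def add.commute)
    show ?thesis unfolding eq sumM' using fS nS IH mm key harm predn
      by (simp add: S_def[symmetric] field_simps) 
  qed
qed

lemma ftl:
  fixes y :: "nat \<Rightarrow> real"
  assumes "finite I" "\<And>i. \<bar>y i\<bar> \<le> 1"
  shows "(\<Sum>i\<in>I. (y i - (\<Sum>k\<in>I\<inter>{..<i}. y k) / card (I\<inter>{..<i}))\<^sup>2)
     \<le> (\<Sum>i\<in>I. (y i - m)\<^sup>2) + 8 * harm (card I)"
proof -
  obtain n where "I \<subseteq> {..<n}" using assms(1) finite_nat_iff_bounded by auto
  then have e: "I \<inter> {..<n} = I" by auto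
  show ?thesis using ftl_aux[of y I n, OF assms(2)] mean_min[OF assms(1), of y m] unfolding e by linarith
qed

lemma clip_le:
  fixes y a b :: real
  assumes "\<bar>y\<bar> \<le> 1"
  shows "(y - max (-1) (min 1 b))\<^sup>2 \<le> (y - a)\<^sup>2 + 4 * \<bar>a - b\<bar>"
proof -
  define ca where "ca = max (-1) (min 1 a)"
  define cb where "cb = max (-1) (min 1 b)"
  have h1: "(y - ca)\<^sup>2 \<le> (y - a)\<^sup>2"
  proof -
    have "\<bar>y - ca\<bar> \<le> \<bar>y - a\<bar>" using assms unfolding ca_def by (smt (verit))
    then show ?thesis by (metis abs_le_square_iff)
  qed
  have h2: "\<bar>ca - cb\<bar> \<le> \<bar>a - b\<bar>" unfolding ca_def cb_def by (smt (verit))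
  have h3: "\<bar>2*y - ca - cb\<bar> \<le> 4" using assms unfolding ca_def cb_def by (smt (verit))
  have "(y - cb)\<^sup>2 = (y - ca)\<^sup>2 + (ca - cb) * (2*y - ca - cb)"
    by (simp add: power2_eq_square algebra_simps)
  also have "(ca - cb) * (2*y - ca - cb) \<le> \<bar>a - b\<bar> * 4"
  proof -
    have "(ca - cb) * (2*y - ca - cb) \<le> \<bar>ca - cb\<bar> * \<bar>2*y - ca - cb\<bar>"
      by (metis abs_ge_self abs_mult)
    also have "\<dots> \<le> \<bar>a - b\<bar> * 4" using h2 h3 by (intro mult_mono) auto
    finally show ?thesis .
  qed
  finally show ?thesis using h1 unfolding cb_def by linarith
qed

lemma aux4: "(a::real) \<le> b + 4 * u \<Longrightarrow> u \<le> v \<Longrightarrow> a \<le> b + 4 * v"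
  by linarith

lemma net_exists:
  assumes "totally_bounded (UNIV :: 'a::metric_space set)" "\<epsilon> > 0"
  shows "\<exists>S::'a set. finite S \<and> card S = net_number (UNIV::'a set) \<epsilon> \<and> (\<forall>x. \<exists>s\<in>S. dist x s \<le> \<epsilon>)"
proof -
  have "\<exists>k. finite k \<and> (UNIV::'a set) \<subseteq> (\<Union>x\<in>k. {y. dist x y < \<epsilon>})"
    using assms(1) assms(2) unfolding totally_bounded_metric by simp
  then obtain k :: "'a set" where k: "finite k" "UNIV \<subseteq> (\<Union>x\<in>k. {y. dist x y < \<epsilon>})"
    by (elim exE conjE)
  define Q where "Q n = (\<exists>S. S \<subseteq> (UNIV::'a set) \<and> finite S \<and> card S = n \<and> (\<forall>x\<in>UNIV. \<exists>s\<in>S. dist x s \<le> \<epsilon>))" for n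
  have cov: "\<forall>x\<in>UNIV. \<exists>s\<in>k. dist x s \<le> \<epsilon>"
  proof
    fix x :: 'a
    have "x \<in> (\<Union>x\<in>k. {y. dist x y < \<epsilon>})" using k(2) by (rule subsetD) simp
    then obtain s where s: "s \<in> k" "dist s x < \<epsilon>" by (elim UN_E) simp
    then show "\<exists>s\<in>k. dist x s \<le> \<epsilon>"
      by (intro bexI[of _ s]) (simp_all add: dist_commute)
  qed
  have "Q (card k)" unfolding Q_def using k(1) cov by (intro exI[of _ k]) simp
  then have QL: "Q (LEAST n. Q n)" by (rule LeastI)
  have Qm: "\<exists>S::'a set. finite S \<and> card S = m \<and> (\<forall>x. \<exists>s\<in>S. dist x s \<le> \<epsilon>)" if "Q m" for m
    using that unfolding Q_def by simp
  have "net_number (UNIV::'a set) \<epsilon> = (LEAST n. Q n)" unfolding net_number_def Q_def ..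
  then show ?thesis using Qm[OF QL] by simp
qed

lemma entropy_card:
  assumes "\<bar>metric_entropy (UNIV :: 'a::metric_space set) \<epsilon>\<bar> \<le> E"
  shows "real (net_number (UNIV :: 'a set) \<epsilon>) \<le> 2 powr E"
proof (cases "net_number (UNIV :: 'a set) \<epsilon> = 0")
  case True then show ?thesis by simp
next
  case False
  then have pos: "real (net_number (UNIV :: 'a set) \<epsilon>) > 0" by simp
  have "log 2 (real (net_number (UNIV :: 'a set) \<epsilon>)) \<le> E"
    using assms unfolding metric_entropy_def by linarith
  then have "2 powr log 2 (real (net_number (UNIV :: 'a set) \<epsilon>)) \<le> 2 powr E"
    by (intro powr_mono) auto
  then show ?thesis using pos by simp
qed

theorem corollary9:
  fixes \<gamma> \<beta> :: real
  assumes "totally_bounded (UNIV :: 'a::metric_space set)"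
    and "\<gamma> > 0"
    and "(\<lambda>\<epsilon>. metric_entropy (UNIV :: 'a set) \<epsilon>) \<in> \<Theta>[at_right 0](\<lambda>\<epsilon>. (1 / \<epsilon>) powr \<gamma>)"
    and "0 < \<beta>" and "\<beta> \<le> 1"
  shows "\<exists>C::real. \<forall>c B :: real. c > 0 \<longrightarrow> B > 0 \<longrightarrow>
    (\<exists>P :: ('a \<times> real) list \<Rightarrow> 'a \<Rightarrow> real.
      \<forall>F :: 'a \<Rightarrow> real. (\<forall>x. \<bar>F x\<bar> \<le> B) \<and> holder \<beta> c F \<longrightarrow>
        (\<exists>N0::nat. \<forall>N\<ge>N0. \<forall>(x :: nat \<Rightarrow> 'a) (y :: nat \<Rightarrow> real).
           (\<forall>n. -1 \<le> y n \<and> y n \<le> 1) \<longrightarrow>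
           (\<Sum>n=1..N. (y n - predictions P x y n)\<^sup>2)
             \<le> (\<Sum>n=1..N. (y n - F (x n))\<^sup>2)
                + C * c * real N / (log 2 (real N)) powr (\<beta> / \<gamma>)))"
proof -
  have g: "\<gamma> > 0" and b: "\<beta> > 0" using assms by auto
  from bigthetaD1[OF assms(3)] obtain A where A: "A > 0" and
    ev: "eventually (\<lambda>\<epsilon>. norm (metric_entropy (UNIV :: 'a set) \<epsilon>) \<le> A * norm ((1/\<epsilon>) powr \<gamma>)) (at_right 0)"
    by (elim landau_o.bigE) auto
  then obtain e0 where e0: "e0 > 0" and
    e0b: "\<And>\<epsilon>. 0 < \<epsilon> \<Longrightarrow> \<epsilon> < e0 \<Longrightarrow> \<bar>metric_entropy (UNIV :: 'a set) \<epsilon>\<bar> \<le> A * (1/\<epsilon>) powr \<gamma>"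
    unfolding eventually_at_right_field by auto
  define p where "p = \<beta> / \<gamma>"
  have p: "p > 0" using g b by (simp add: p_def)
  define C where "C = 4 * (4*A) powr p + 2"
  define eps where "eps j = min (e0/2) ((2*A/(real j+1)) powr (1/\<gamma>))" for j :: nat
  define net where "net j = (SOME S::'a set. finite S \<and> card S = net_number (UNIV::'a set) (eps j) \<and> (\<forall>x. \<exists>s\<in>S. dist x s \<le> eps j))" for j
  define cell where "cell j z = (SOME s. s \<in> net j \<and> dist z s \<le> eps j)" for j z
  define ep where "ep n = nat \<lfloor>log 2 (real n)\<rfloor>" for n :: nat
  define key where "key n z = (ep n, cell (ep n) z)" for n z
  define P where "P h z = (let n = Suc (length h); W = {i\<in>{1..<n}. key i (fst (h!(i-1))) = key n z}
      in (\<Sum>i\<in>W. snd (h!(i-1))) / real (card W))" for h :: "('a \<times> real) list" and z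
  define K1 where "K1 = 2 powr (A * (2/e0) powr \<gamma>)"
  define Mh where "Mh = (e0/2) powr \<beta>"
  have eps_pos: "eps j > 0" for j using e0 A by (simp add: eps_def)
  have eps_lt: "eps j < e0" for j using e0 by (simp add: eps_def)
  have net: "finite (net j) \<and> card (net j) = net_number (UNIV::'a set) (eps j) \<and> (\<forall>x. \<exists>s\<in>net j. dist x s \<le> eps j)" for j
    proof -
    have "\<exists>S::'a set. finite S \<and> card S = net_number (UNIV::'a set) (eps j) \<and> (\<forall>x. \<exists>s\<in>S. dist x s \<le> eps j)"
      by (rule net_exists[OF assms(1) eps_pos])
    then show ?thesis unfolding net_def by (rule someI_ex)
  qed
  have cell: "cell j z \<in> net j \<and> dist z (cell j z) \<le> eps j" for j z
    unfolding cell_def using net[of j] by (metis (mono_tags, lifting) someI_ex)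
  have card_net: "real (card (net j)) \<le> K1 + 2 powr ((real j + 1)/2)" for j
  proof -
    have "real (card (net j)) \<le> 2 powr (A * (1/eps j) powr \<gamma>)"
      using net[of j] entropy_card[OF e0b[OF eps_pos eps_lt]] by simp
    also have "\<dots> \<le> K1 + 2 powr ((real j + 1)/2)"
    proof (cases "eps j = e0/2")
      case True
      then have "1/eps j = 2/e0" using eps_pos[of j] by (simp add: field_simps)
      then show ?thesis using powr_ge_zero[of 2 "(real j + 1)/2"] by (simp add: K1_def)
    next
      case False
      then have e: "eps j = (2*A/(real j+1)) powr (1/\<gamma>)" by (simp add: eps_def min_def split: if_splits)
      have "(1/eps j) powr \<gamma> = 1 / (eps j powr \<gamma>)" using eps_pos[of j] by (simp add: powr_divide)
      also have "eps j powr \<gamma> = 2*A/(real j+1)" unfolding e using g A by (simp add: powr_powr)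
      finally have EQ: "A * (1/eps j) powr \<gamma> = (real j + 1)/2" using A by simp
      then have "2 powr (A * (1/eps j) powr \<gamma>) = 2 powr ((real j + 1)/2)" by (simp only: EQ)
      then show ?thesis using powr_ge_zero[of 2 "A * (2/e0) powr \<gamma>"] unfolding K1_def by linarith
    qed
    finally show ?thesis .
  qed
  have eps_b1: "eps j powr \<beta> \<le> Mh" for j
    unfolding Mh_def using eps_pos[of j] b by (intro powr_mono2) (auto simp: eps_def)
  have eps_b2: "eps j powr \<beta> \<le> (2*A/(real j+1)) powr p" for j
  proof -
    have "eps j powr \<beta> \<le> ((2*A/(real j+1)) powr (1/\<gamma>)) powr \<beta>"
      using eps_pos[of j] b by (intro powr_mono2) (auto simp: eps_def)
    also have "\<dots> = (2*A/(real j+1)) powr p" using A by (simp add: powr_powr p_def)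
    finally show ?thesis .
  qed
  obtain K where K: "K > 0" "\<And>n. norm (harm n - ln (real n)) \<le> K"
    using convergent_imp_Bseq[OF euler_mascheroni_convergent] by (auto elim!: BseqE)
  have harmK: "harm n \<le> ln (real n) + K" for n using K(2)[of n] by simp
  have Mh0: "Mh \<ge> 0" and K10: "K1 \<ge> 0" by (auto simp: Mh_def K1_def)
  have ep_le: "real (ep n) \<le> log 2 (real n)" if "n \<ge> 1" for n
    using that by (simp add: ep_def)
  have ep_gt: "real (ep n) + 1 > log 2 (real n)" if "n \<ge> 1" for n
    using that by (simp add: ep_def)
  have ep_mono: "ep n \<le> ep N" if "1 \<le> n" "n \<le> N" for n N
    using that unfolding ep_def by (intro nat_mono floor_mono) auto
  show ?thesis
  proof (intro exI[of _ C] allI impI exI[of _ P])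
    fix c B :: real and F :: "'a \<Rightarrow> real"
    assume c: "c > 0" and "B > 0" and FH: "(\<forall>x. \<bar>F x\<bar> \<le> B) \<and> holder \<beta> c F"
    define G where "G z = max (-1) (min 1 (F z))" for z
    let ?f = "\<lambda>N::nat. 4*c*Mh* sqrt (real N) + (log 2 N + 1)*(K1 + 2 * sqrt (real N)) * 8 * (ln N + K)"
    have "?f \<in> o(\<lambda>N. real N / (log 2 (real N)) powr p)"
      using p Mh0 K10 K by real_asymp
    from landau_o.smallD[OF this, of "2*c"] c
    have ev1: "eventually (\<lambda>N. norm (?f N) \<le> 2*c * norm (real N / (log 2 (real N)) powr p)) sequentially"
      by simp
    from eventually_conj[OF ev1 eventually_ge_at_top[of 2]]
    obtain N0 where N0: "\<And>N. N \<ge> N0 \<Longrightarrow> norm (?f N) \<le> 2*c * norm (real N / (log 2 (real N)) powr p) \<and> N \<ge> 2"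
      unfolding eventually_sequentially by blast
    show "\<exists>N0::nat. \<forall>N\<ge>N0. \<forall>(x :: nat \<Rightarrow> 'a) (y :: nat \<Rightarrow> real).
           (\<forall>n. -1 \<le> y n \<and> y n \<le> 1) \<longrightarrow>
           (\<Sum>n=1..N. (y n - predictions P x y n)\<^sup>2)
             \<le> (\<Sum>n=1..N. (y n - F (x n))\<^sup>2)
                + C * c * real N / (log 2 (real N)) powr (\<beta> / \<gamma>)"
    proof (intro exI[of _ N0] allI impI)
      fix N :: nat and x :: "nat \<Rightarrow> 'a" and y :: "nat \<Rightarrow> real"
      assume NN0: "N \<ge> N0" and yb: "\<forall>n. -1 \<le> y n \<and> y n \<le> 1"
      have fN0: "norm (?f N) \<le> 2*c * norm (real N / (log 2 (real N)) powr p)" and N2: "N \<ge> 2"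
        using N0[OF NN0] by auto
      have "norm (real N / (log 2 (real N)) powr p) = real N / (log 2 (real N)) powr p" by simp
      then have fN: "?f N \<le> 2*c * (real N / (log 2 (real N)) powr p)"
        using fN0 abs_ge_self[of "?f N"] unfolding real_norm_def by linarith
      have y1: "\<And>i. \<bar>y i\<bar> \<le> 1" using yb by (simp add: abs_le_iff)
      define L where "L = log 2 (real N)"
      have L1: "L \<ge> 1" using N2 by (simp add: L_def)
      have Npos: "real N > 0" using N2 by simp
      define J where "J = ep N"
      define T where "T = Sigma {..J} net"
      define kx where "kx n = key n (x n)" for n
      define I where "I q = {n\<in>{1..N}. kx n = q}" for q
      have fT: "finite T" unfolding T_def using net by (intro finite_SigmaI) auto
      have kxT: "kx ` {1..N} \<subseteq> T"
      proof
        fix z assume "z \<in> kx ` {1..N}"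
        then obtain n where n: "n \<in> {1..N}" "z = kx n" by blast
        have "ep n \<le> J" unfolding J_def using n by (intro ep_mono) auto
        moreover have "cell (ep n) (x n) \<in> net (ep n)" using cell by blast
        ultimately show "z \<in> T" unfolding T_def n(2) kx_def key_def by simp
      qed
      have pred: "predictions P x y n = (\<Sum>i\<in>I (kx n) \<inter> {..<n}. y i) / real (card (I (kx n) \<inter> {..<n}))"
        if n: "n \<in> {1..N}" for n
      proof -
        define h where "h = map (\<lambda>i. (x i, y i)) [1..<n]"
        have len: "Suc (length h) = n" using n by (auto simp: h_def)
        have nth: "h ! (i-1) = (x i, y i)" if "i \<in> {1..<n}" for i
          using that by (auto simp: h_def nth_map)
        have W: "{i\<in>{1..<n}. key i (fst (h ! (i-1))) = key n (x n)} = I (kx n) \<inter> {..<n}"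
        proof (intro set_eqI iffI)
          fix i assume "i \<in> {i\<in>{1..<n}. key i (fst (h ! (i-1))) = key n (x n)}"
          then show "i \<in> I (kx n) \<inter> {..<n}" using n nth[of i] unfolding I_def kx_def by auto
        next
          fix i assume "i \<in> I (kx n) \<inter> {..<n}"
          then show "i \<in> {i\<in>{1..<n}. key i (fst (h ! (i-1))) = key n (x n)}" using n nth[of i] unfolding I_def kx_def by auto
        qed
        have "predictions P x y n = P h (x n)" by (simp add: predictions_def h_def)
        also have "\<dots> = (\<Sum>i\<in>I (kx n) \<inter> {..<n}. snd (h ! (i-1))) / real (card (I (kx n) \<inter> {..<n}))"
          unfolding P_def Let_def len W ..
        also have "(\<Sum>i\<in>I (kx n) \<inter> {..<n}. snd (h ! (i-1))) = (\<Sum>i\<in>I (kx n) \<inter> {..<n}. y i)"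
        proof (intro sum.cong refl)
          fix i assume "i \<in> I (kx n) \<inter> {..<n}"
          then have "i \<in> {1..<n}" by (auto simp: I_def)
          then show "snd (h ! (i-1)) = y i" using nth by simp
        qed
        finally show ?thesis .
      qed
      have S1: "(\<Sum>n=1..N. (y n - predictions P x y n)\<^sup>2) = (\<Sum>q\<in>T. \<Sum>n\<in>I q. (y n - predictions P x y n)\<^sup>2)"
        unfolding I_def using sum.group[OF _ fT kxT, of "\<lambda>n. (y n - predictions P x y n)\<^sup>2"] by simp
      define hh where "hh n = (y n - F (x n))\<^sup>2 + 4*c*eps (ep n) powr \<beta>" for n
      have S2: "(\<Sum>n\<in>I q. (y n - predictions P x y n)\<^sup>2) \<le> (\<Sum>n\<in>I q. hh n) + 8 * harm N" for q
      proof -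
        have fI: "finite (I q)" by (simp add: I_def)
        have "(\<Sum>n\<in>I q. (y n - predictions P x y n)\<^sup>2) = (\<Sum>n\<in>I q. (y n - (\<Sum>k\<in>I q \<inter> {..<n}. y k) / real (card (I q \<inter> {..<n})))\<^sup>2)"
        proof (intro sum.cong refl)
          fix n assume "n \<in> I q"
          then have "kx n = q" "n \<in> {1..N}" by (auto simp: I_def)
          then show "(y n - predictions P x y n)\<^sup>2 = (y n - (\<Sum>k\<in>I q \<inter> {..<n}. y k) / real (card (I q \<inter> {..<n})))\<^sup>2"
            using pred[of n] by simp
        qed
        also have "\<dots> \<le> (\<Sum>n\<in>I q. (y n - G (snd q))\<^sup>2) + 8 * harm (card (I q))"
          by (rule ftl[OF fI y1])
        finally have a: "(\<Sum>n\<in>I q. (y n - predictions P x y n)\<^sup>2) \<le> (\<Sum>n\<in>I q. (y n - G (snd q))\<^sup>2) + 8 * harm (card (I q))" .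
        have "card (I q) \<le> card {1..N}" by (rule card_mono) (auto simp: I_def)
        then have bb: "harm (card (I q)) \<le> (harm N :: real)" by (intro harm_mono) simp
        have cc: "(\<Sum>n\<in>I q. (y n - G (snd q))\<^sup>2) \<le> (\<Sum>n\<in>I q. hh n)"
        proof (rule sum_mono)
          fix n assume "n \<in> I q"
          then have q: "q = (ep n, cell (ep n) (x n))" by (simp add: I_def kx_def key_def)
          have d: "dist (x n) (snd q) \<le> eps (ep n)" using cell q by simp
          have "\<bar>F (x n) - F (snd q)\<bar> \<le> c * dist (x n) (snd q) powr \<beta>" using FH by (simp add: holder_def)
          also have "\<dots> \<le> c * eps (ep n) powr \<beta>" using d c b by (intro mult_left_mono powr_mono2) auto
          finally have hb: "\<bar>F (x n) - F (snd q)\<bar> \<le> c * eps (ep n) powr \<beta>" .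
          show "(y n - G (snd q))\<^sup>2 \<le> hh n" unfolding hh_def G_def mult.assoc
            by (rule aux4[OF clip_le[where y="y n" and a="F (x n)" and b="F (snd q)", OF y1[of n]] hb])
        qed
        show ?thesis using a bb cc by linarith
      qed
      have S3: "(\<Sum>q\<in>T. (\<Sum>n\<in>I q. hh n) + 8 * harm N) = (\<Sum>n=1..N. hh n) + real (card T) * (8 * harm N)"
        unfolding sum.distrib I_def using sum.group[OF _ fT kxT, of hh] by simp
      have epsb: "eps (ep n) powr \<beta> \<le> (if real n < sqrt N then Mh else 0) + (4*A) powr p / L powr p"
        if n: "n \<in> {1..N}" for n
      proof (cases "real n < sqrt N")
        case True
        have nn: "0 \<le> (4*A) powr p / L powr p" by simp
        from True have "(if real n < sqrt N then Mh else 0) = Mh" by simp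
        then show ?thesis using eps_b1[of "ep n"] nn by linarith
      next
        case False
        have sq: "sqrt (real N) = real N powr (1/2)" by (simp add: powr_half_sqrt)
        have "log 2 (sqrt N) = L / 2" unfolding sq log_powr L_def by simp
        moreover have "log 2 (sqrt N) \<le> log 2 n" using False Npos n by (subst log_le_cancel_iff) auto
        moreover have "real (ep n) + 1 > log 2 n" using n by (intro ep_gt) auto
        ultimately have l: "L / 2 < real (ep n) + 1" by linarith
        have "eps (ep n) powr \<beta> \<le> (2*A/(real (ep n)+1)) powr p" by (rule eps_b2)
        also have "\<dots> \<le> (2*A/(L/2)) powr p"
          using l L1 A p by (intro powr_mono2 divide_left_mono) auto
        also have "(2*A/(L/2)) powr p = (4*A) powr p / L powr p" using A L1 by (simp add: powr_divide)
        finally show ?thesis using False by simp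
      qed
      have cardsq: "real (card {n\<in>{1..N}. real n < sqrt N}) \<le> sqrt N"
      proof -
        have "{n\<in>{1..N}. real n < sqrt N} \<subseteq> {1..nat \<lfloor>sqrt N\<rfloor>}" by (auto simp: le_nat_floor)
        then have "card {n\<in>{1..N}. real n < sqrt N} \<le> nat \<lfloor>sqrt N\<rfloor>"
          using card_mono[of "{1..nat \<lfloor>sqrt N\<rfloor>}"] by fastforce
        then have "real (card {n\<in>{1..N}. real n < sqrt N}) \<le> real (nat \<lfloor>sqrt N\<rfloor>)" by (rule of_nat_mono)
        also have "real (nat \<lfloor>sqrt N\<rfloor>) \<le> sqrt N" by (simp add: of_nat_nat)
        finally show ?thesis .
      qed
      have S4: "(\<Sum>n=1..N. eps (ep n) powr \<beta>) \<le> Mh * sqrt N + N * ((4*A) powr p / L powr p)"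
      proof -
        have "(\<Sum>n=1..N. eps (ep n) powr \<beta>) \<le> (\<Sum>n=1..N. (if real n < sqrt N then Mh else 0) + (4*A) powr p / L powr p)"
          by (rule sum_mono) (rule epsb)
        also have "\<dots> = real (card {n\<in>{1..N}. real n < sqrt N}) * Mh + N * ((4*A) powr p / L powr p)"
          by (simp add: sum.distrib sum.inter_filter[symmetric])
        also have "\<dots> \<le> Mh * sqrt N + N * ((4*A) powr p / L powr p)"
          using cardsq Mh0 by (simp add: mult.commute mult_left_mono)
        finally show ?thesis .
      qed
      have S5: "real (card T) \<le> (L + 1) * (K1 + 2 * sqrt N)"
      proof -
        have JL: "real J \<le> L" using ep_le[of N] N2 by (simp add: J_def L_def)
        have pw: "2 powr ((L+1)/2) \<le> 2 * sqrt N"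
        proof -
          have "2 powr (L+1) = 2 * N" using Npos by (simp add: powr_add L_def)
          then have "2 powr ((L+1)/2) = sqrt (2 * N)"
            by (metis powr_powr powr_half_sqrt powr_ge_zero times_divide_eq_right mult_1_right)
          also have "\<dots> = sqrt 2 * sqrt N" by (simp add: real_sqrt_mult)
          also have "\<dots> \<le> 2 * sqrt N" using real_le_lsqrt[of 2 2] by (intro mult_right_mono) auto
          finally show ?thesis .
        qed
        have "real (card T) = (\<Sum>j\<le>J. real (card (net j)))"
          unfolding T_def using net by (simp add: card_SigmaI)
        also have "\<dots> \<le> (\<Sum>j\<le>J. K1 + 2 * sqrt N)"
        proof (rule sum_mono)
          fix j assume "j \<in> {..J}"
          then have "real j \<le> L" using JL by simp
          then have "2 powr ((real j+1)/2) \<le> 2 powr ((L+1)/2)" by (intro powr_mono) auto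
          then show "real (card (net j)) \<le> K1 + 2 * sqrt N" using card_net[of j] pw by linarith
        qed
        also have "\<dots> = (real J + 1) * (K1 + 2 * sqrt N)" by simp
        also have "\<dots> \<le> (L + 1) * (K1 + 2 * sqrt N)" using JL K10 by (intro mult_right_mono) auto
        finally show ?thesis .
      qed
      have S6: "real (card T) * (8 * harm N) \<le> (L + 1) * (K1 + 2 * sqrt N) * 8 * (ln N + K)"
      proof -
        have "real (card T) * (8 * harm N) \<le> ((L + 1) * (K1 + 2 * sqrt N)) * (8 * (ln N + K))"
          using S5 harmK[of N] harm_nonneg[of N] by (intro mult_mono) auto
        then show ?thesis by (simp only: mult.assoc)
      qed
      have S7: "(\<Sum>n=1..N. hh n) = (\<Sum>n=1..N. (y n - F (x n))\<^sup>2) + 4*c*(\<Sum>n=1..N. eps (ep n) powr \<beta>)"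
        unfolding hh_def by (simp add: sum.distrib sum_distrib_left)
      have "(\<Sum>n=1..N. (y n - predictions P x y n)\<^sup>2) \<le> (\<Sum>q\<in>T. (\<Sum>n\<in>I q. hh n) + 8 * harm N)"
        unfolding S1 by (rule sum_mono) (rule S2)
      also have "\<dots> \<le> (\<Sum>n=1..N. (y n - F (x n))\<^sup>2) + 4*c*(Mh * sqrt N + N * ((4*A) powr p / L powr p))
           + (L + 1) * (K1 + 2 * sqrt N) * 8 * (ln N + K)"
        unfolding S3 S7 using S6 S4 c by (smt (verit) mult_left_mono)
      also have "\<dots> \<le> (\<Sum>n=1..N. (y n - F (x n))\<^sup>2) + 4*c*(N * ((4*A) powr p / L powr p)) + 2*c * (real N / L powr p)"
        using fN unfolding L_def by (simp add: algebra_simps)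
      also have "\<dots> = (\<Sum>n=1..N. (y n - F (x n))\<^sup>2) + C * c * real N / L powr p"
        by (simp add: C_def field_simps) (simp add: add_divide_distrib)
      finally show "(\<Sum>n=1..N. (y n - predictions P x y n)\<^sup>2) \<le> (\<Sum>n=1..N. (y n - F (x n))\<^sup>2) + C * c * real N / log 2 (real N) powr (\<beta> / \<gamma>)"
        unfolding L_def p_def .
    qed
  qed
qed
end
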